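(* Let $q\in\mathbb{C}$, $|q|<1$, $\mathbf{s}=(s_1,\dots,s_d)\in\mathbb{N}^d$ and $\mathbf{a}=(a_1,\dots,a_d)\in\mathbb{Z}_{\ge0}^d$ with $a_j\le s_j$ for all $j$, and put $w=s_1+\dots+s_d$. Let $$G(t)=\mathbf{R}^{s_1-a_1}\Big[\mathbf{P}^{a_1}\big[\mathbf{y}\,\mathbf{R}^{s_2-a_2}[\mathbf{P}^{a_2}[\mathbf{y}\cdots\mathbf{R}^{s_d-a_d}[\mathbf{P}^{a_d}[\mathbf{y}]]\cdots]]\big]\Big](t).$$ If $s_1+\dots+s_j>a_1+\dots+a_j$ for all $j=1,\dots,d$, then $\zeta_q^{\mathbf{s}-\mathbf{a}}[\mathbf{s}]=(1-q)^wG(1)$ and $\mathfrak{z}_q^{\mathbf{s}-\mathbf{a}}[\mathbf{s}]=G(1)$, where $\mathbf{s}-\mathbf{a}=(s_1-a_1,\dots,s_d-a_d)$.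
   Context: $\mathfrak{z}_q^{\mathbf{t}}[\mathbf{s}]=\sum_{k_1>\dots>k_d>0}\prod_{j}\frac{q^{k_jt_j}}{(1-q^{k_j})^{s_j}}$ and $\zeta_q^{\mathbf{t}}[\mathbf{s}]=(1-q)^{|\mathbf{s}|}\mathfrak{z}_q^{\mathbf{t}}[\mathbf{s}]$. Operators on power series $f(t)$ without constant term in $t$: $\mathbf{P}[f](t)=\sum_{k\ge0}f(q^kt)$, $\mathbf{R}[f](t)=\sum_{k\ge1}f(q^kt)$, with $n$-fold compositions $\mathbf{P}^n,\mathbf{R}^n$; $\mathbf{y}$ denotes multiplication by $\mathbf{y}(t)=\frac{t}{1-t}$ (the innermost $\mathbf{y}$ being the function itself). $G(1)$ is the value at $t=1$. *)

theory Defs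
  imports "HOL-Analysis.Analysis"
begin

definition mzq :: "complex \<Rightarrow> nat list \<Rightarrow> nat list \<Rightarrow> complex" where
  "mzq q t s = infsum (\<lambda>ks. \<Prod>j<length s. q ^ (ks ! j * t ! j) / (1 - q ^ (ks ! j)) ^ (s ! j))
      {ks. length ks = length s \<and> sorted_wrt (>) ks \<and> (\<forall>k\<in>set ks. 0 < k)}"

definition zetaq :: "complex \<Rightarrow> nat list \<Rightarrow> nat list \<Rightarrow> complex" where
  "zetaq q t s = (1 - q) ^ sum_list s * mzq q t s"

definition Pop :: "complex \<Rightarrow> (complex \<Rightarrow> complex) \<Rightarrow> complex \<Rightarrow> complex" where
  "Pop q f t = (\<Sum>k. f (q ^ k * t))"

definition Rop :: "complex \<Rightarrow> (complex \<Rightarrow> complex) \<Rightarrow> complex \<Rightarrow> complex" where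
  "Rop q f t = (\<Sum>k. f (q ^ Suc k * t))"

definition yfun :: "complex \<Rightarrow> complex" where
  "yfun t = t / (1 - t)"

text \<open>Gfun q s a = R^{s1-a1}[P^{a1}[y R^{s2-a2}[... R^{sd-ad}[P^{ad}[y]]...]]];
  the empty tail is the constant 1, so the innermost y is y itself.\<close>
fun Gfun :: "complex \<Rightarrow> nat list \<Rightarrow> nat list \<Rightarrow> complex \<Rightarrow> complex" where
  "Gfun q [] [] = (\<lambda>_. 1)"
| "Gfun q (s # ss) (a # as) =
     (Rop q ^^ (s - a)) ((Pop q ^^ a) (\<lambda>t. yfun t * Gfun q ss as t))"
| "Gfun q _ _ = (\<lambda>_. 0)"

end

theory Submission
  imports Defs
begin

definition rad1 :: "(nat \<Rightarrow> 'b::real_normed_vector) \<Rightarrow> bool" where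
  "rad1 c \<longleftrightarrow> (\<forall>r::real. 0 \<le> r \<and> r < 1 \<longrightarrow> summable (\<lambda>m. norm (c m) * r ^ m))"

lemma rad1D: "rad1 c \<Longrightarrow> 0 \<le> r \<Longrightarrow> r < 1 \<Longrightarrow> summable (\<lambda>m. norm (c m) * r ^ m)"
  unfolding rad1_def by blast

lemma rad1_normD:
  fixes c :: "nat \<Rightarrow> 'b::real_normed_field"
  assumes "rad1 c" "norm t < 1"
  shows "summable (\<lambda>m. norm (c m * t ^ m))"
  using rad1D[OF assms(1), of "norm t"] assms(2) by (simp add: norm_mult norm_power)

lemma rad1_bound:
  fixes c g :: "nat \<Rightarrow> 'b::real_normed_algebra"
  assumes "rad1 c" "\<And>m. norm (g m) \<le> K"
  shows "rad1 (\<lambda>m. g m * c m)"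
  unfolding rad1_def
proof (intro allI impI)
  fix r :: real assume r: "0 \<le> r \<and> r < 1"
  have s: "summable (\<lambda>m. K * (norm (c m) * r ^ m))"
    using rad1D[OF assms(1)] r by (intro summable_mult) auto
  show "summable (\<lambda>m. norm (g m * c m) * r ^ m)"
  proof (rule summable_comparison_test[OF _ s], intro exI allI impI)
    fix m :: nat
    have "norm (g m * c m) \<le> K * norm (c m)"
      by (meson assms(2) norm_ge_zero mult_right_mono norm_mult_ineq order_trans)
    then show "norm (norm (g m * c m) * r ^ m) \<le> K * (norm (c m) * r ^ m)"
      using r mult_right_mono[of "norm (g m * c m)" "K * norm (c m)" "r ^ m"]
      by (simp add: abs_mult mult.assoc)
  qed
qed

lemma sum_atMost_shift_if:
  fixes x :: "nat \<Rightarrow> 'a::comm_monoid_add"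
  shows "(\<Sum>i\<le>k. if k - i = 0 then 0 else x i) = (\<Sum>i<k. x i)"
proof (cases k)
  case 0 then show ?thesis by simp
next
  case (Suc j)
  have "(\<Sum>i\<le>Suc j. if Suc j - i = 0 then 0 else x i) = (\<Sum>i\<le>j. if Suc j - i = 0 then 0 else x i)"
    by (simp add: sum.atMost_Suc)
  also have "\<dots> = (\<Sum>i\<le>j. x i)" by (intro sum.cong) auto
  finally show ?thesis using Suc by (simp add: lessThan_Suc_atMost)
qed

lemma rad1_psum:
  fixes c :: "nat \<Rightarrow> 'b::real_normed_vector"
  assumes "rad1 c"
  shows "rad1 (\<lambda>m. \<Sum>n<m. c n)"
  unfolding rad1_def
proof (intro allI impI)
  fix r :: real assume r: "0 \<le> r \<and> r < 1"
  define a where "a i = norm (c i) * r ^ i" for i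
  define b where "b j = (if j = 0 then 0 else r ^ j)" for j
  have sa: "summable (\<lambda>i. norm (a i))" using rad1D[OF assms] r by (simp add: a_def abs_mult)
  have sb: "summable (\<lambda>j. norm (b j))"
    by (rule summable_comparison_test[OF _ summable_geometric[of r]]) (use r in \<open>auto simp: b_def\<close>)
  have P: "summable (\<lambda>k. \<Sum>i\<le>k. a i * b (k - i))" by (rule summable_Cauchy_product[OF sa sb])
  have eq: "(\<Sum>i\<le>k. a i * b (k - i)) = (\<Sum>i<k. norm (c i)) * r ^ k" for k
  proof -
    have "(\<Sum>i\<le>k. a i * b (k - i)) = (\<Sum>i\<le>k. if k - i = 0 then 0 else norm (c i) * r ^ k)"
    proof (intro sum.cong refl)
      fix i assume "i \<in> {..k}"
      then have "r ^ i * r ^ (k - i) = r ^ k" by (simp flip: power_add)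
      then show "a i * b (k - i) = (if k - i = 0 then 0 else norm (c i) * r ^ k)"
        by (simp add: a_def b_def mult.assoc)
    qed
    also have "\<dots> = (\<Sum>i<k. norm (c i) * r ^ k)" by (rule sum_atMost_shift_if)
    finally show ?thesis by (simp add: sum_distrib_right)
  qed
  show "summable (\<lambda>m. norm (\<Sum>n<m. c n) * r ^ m)"
  proof (rule summable_comparison_test[OF _ P], intro exI allI impI)
    fix m :: nat
    have "norm (\<Sum>n<m. c n) * r ^ m \<le> (\<Sum>i<m. norm (c i)) * r ^ m"
      using r by (intro mult_right_mono norm_sum) auto
    then show "norm (norm (\<Sum>n<m. c n) * r ^ m) \<le> (\<Sum>i\<le>m. a i * b (m - i))"
      using r by (simp add: eq)
  qed
qed

lemma infsum_eq_suminf_nat: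
  fixes f :: "nat \<Rightarrow> 'c::banach"
  assumes "f summable_on UNIV"
  shows "infsum f UNIV = suminf f"
  using has_sum_imp_sums[OF has_sum_infsum[OF assms]] by (simp add: sums_iff)

lemma suminf_swap_abs:
  fixes a :: "nat \<Rightarrow> nat \<Rightarrow> 'c::banach"
  assumes A: "\<And>k. summable (\<lambda>m. norm (a k m))"
    and B: "\<And>m. summable (\<lambda>k. norm (a k m))"
    and C: "summable (\<lambda>m. \<Sum>k. norm (a k m))"
  shows "(\<Sum>k. \<Sum>m. a k m) = (\<Sum>m. \<Sum>k. a k m)"
proof -
  have n1: "(\<lambda>p. norm ((\<lambda>(m,k). a k m) p)) summable_on (Sigma UNIV (\<lambda>_. UNIV))"
  proof (rule summable_on_SigmaI[where g = "\<lambda>m. \<Sum>k. norm (a k m)"])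
    show "((\<lambda>y. norm ((\<lambda>(m,k). a k m) (x, y))) has_sum (\<Sum>k. norm (a k x))) UNIV" for x
      using sums_nonneg_imp_has_sum[OF summable_sums[OF B[of x]]] by simp
    show "(\<lambda>m. \<Sum>k. norm (a k m)) summable_on UNIV"
      using C by (intro summable_nonneg_imp_summable_on) (auto intro: suminf_nonneg B)
  qed auto
  have s1: "(\<lambda>(m,k). a k m) summable_on (UNIV \<times> UNIV)"
    using abs_summable_summable[OF n1] by simp
  have s2: "(\<lambda>(k,m). a k m) summable_on (UNIV \<times> UNIV)"
    using s1 summable_on_swap[of "\<lambda>(m,k). a k m" UNIV UNIV] by (simp add: case_prod_unfold UNIV_Times_UNIV[symmetric] del: UNIV_Times_UNIV)
  have i1: "infsum (\<lambda>m. a k m) UNIV = (\<Sum>m. a k m)" for k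
    using norm_summable_imp_has_sum[OF A summable_sums[OF summable_norm_cancel[OF A]]]
    by (simp add: infsumI)
  have i2: "infsum (\<lambda>k. a k m) UNIV = (\<Sum>k. a k m)" for m
    using norm_summable_imp_has_sum[OF B summable_sums[OF summable_norm_cancel[OF B]]]
    by (simp add: infsumI)
  have o1: "(\<lambda>m. infsum (\<lambda>k. a k m) UNIV) summable_on UNIV"
    using summable_on_Sigma_banach[of "\<lambda>m k. a k m" UNIV "\<lambda>_. UNIV"] s1 by simp
  have o2: "(\<lambda>k. infsum (\<lambda>m. a k m) UNIV) summable_on UNIV"
    using summable_on_Sigma_banach[of "\<lambda>k m. a k m" UNIV "\<lambda>_. UNIV"] s2 by simp
  have "infsum (\<lambda>m. infsum (\<lambda>k. a k m) UNIV) UNIV = infsum (\<lambda>k. infsum (\<lambda>m. a k m) UNIV) UNIV"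
    using infsum_swap_banach[of "\<lambda>m k. a k m" UNIV UNIV] s1 by simp
  then show ?thesis
    using infsum_eq_suminf_nat[OF o1] infsum_eq_suminf_nat[OF o2] by (simp add: i1 i2)
qed

lemma norm_inv_1_minus_pow:
  fixes q :: complex
  assumes q: "norm q < 1" and m: "0 < m"
  shows "norm (1 / (1 - q ^ m)) \<le> 1 / (1 - norm q)"
proof -
  have "norm q ^ m \<le> norm q ^ 1"
    by (rule power_decreasing) (use q m in auto)
  then have "1 - norm q \<le> 1 - norm (q ^ m)" by (simp add: norm_power)
  also have "\<dots> \<le> norm (1 - q ^ m)" using norm_triangle_ineq2[of 1 "q^m"] by simp
  finally have h: "1 - norm q \<le> norm (1 - q ^ m)" .
  have "0 < 1 - norm q" using q by simp
  then show ?thesis using h by (simp add: norm_divide frac_le)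
qed

lemma norm_inv_1_minus_pow':
  fixes q :: complex
  assumes q: "norm q < 1"
  shows "norm (1 / (1 - q ^ m)) \<le> 1 / (1 - norm q)"
  using norm_inv_1_minus_pow[OF q, of m] q by (cases "m = 0") auto

lemma Pop_ps:
  fixes q :: complex and c :: "nat \<Rightarrow> complex"
  assumes q: "norm q < 1" and rc: "rad1 c" and c0: "c 0 = 0"
    and f: "\<And>t. norm t < 1 \<Longrightarrow> f t = (\<Sum>m. c m * t ^ m)"
  shows "rad1 (\<lambda>m. c m / (1 - q ^ m))"
    and "norm t < 1 \<Longrightarrow> Pop q f t = (\<Sum>m. c m / (1 - q ^ m) * t ^ m)"
proof -
  have "rad1 (\<lambda>m. 1 / (1 - q ^ m) * c m)"
    by (rule rad1_bound[OF rc norm_inv_1_minus_pow'[OF q]])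
  then show "rad1 (\<lambda>m. c m / (1 - q ^ m))" by simp
next
  assume t: "norm t < 1"
  define a where "a k m = c m * (q ^ k * t) ^ m" for k m
  have nqt: "norm (q ^ k * t) < 1" for k
  proof -
    have "norm (q ^ k) \<le> 1" using q by (simp add: norm_power power_le_one)
    then have "norm (q ^ k * t) \<le> norm t"
      by (simp add: norm_mult mult_left_le_one_le)
    then show ?thesis using t by simp
  qed
  have na: "norm (a k m) = norm (c m) * norm t ^ m * (norm q ^ m) ^ k" for k m
    by (simp add: a_def norm_mult norm_power power_mult_distrib power_mult[symmetric] mult.commute mult.left_commute)
  have A: "summable (\<lambda>m. norm (a k m))" for k
    unfolding a_def by (rule rad1_normD[OF rc nqt])
  have B: "summable (\<lambda>k. norm (a k m))" for m
  proof (cases "m = 0")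
    case True then show ?thesis by (simp add: a_def c0)
  next
    case False
    have "norm q ^ m < 1" using q False by (simp add: power_less_one_iff)
    then show ?thesis unfolding na
      by (intro summable_mult summable_geometric) auto
  qed
  have Bs: "(\<Sum>k. norm (a k m)) = norm (c m) * norm t ^ m / (1 - norm q ^ m)" for m
  proof (cases "m = 0")
    case True then show ?thesis by (simp add: a_def c0)
  next
    case False
    have "norm q ^ m < 1" using q False by (simp add: power_less_one_iff)
    then have "(\<lambda>k. (norm q ^ m) ^ k) sums (1 / (1 - norm q ^ m))"
      by (intro geometric_sums) auto
    then show ?thesis unfolding na
      by (simp add: suminf_mult sums_iff)
  qed
  have C: "summable (\<lambda>m. \<Sum>k. norm (a k m))"
  proof (rule summable_comparison_test[OF _ summable_mult[OF rad1D[OF rc, of "norm t"], of "1 / (1 - norm q)"]], intro exI allI impI)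
    fix m :: nat
    have den: "1 - norm q \<le> 1 - norm q ^ m" if "m \<noteq> 0"
    proof -
      have "norm q ^ m \<le> norm q ^ 1" by (rule power_decreasing) (use q that in auto)
      then show ?thesis by simp
    qed
    have "norm (c m) * norm t ^ m / (1 - norm q ^ m) \<le> 1 / (1 - norm q) * (norm (c m) * norm t ^ m)"
    proof (cases "m = 0")
      case True then show ?thesis by (simp add: c0)
    next
      case False
      have p: "0 < 1 - norm q" using q by simp
      have "1 / (1 - norm q ^ m) \<le> 1 / (1 - norm q)"
        using den[OF False] p by (intro divide_left_mono) auto
      then show ?thesis
        by (metis (no_types, lifting) mult.commute mult_left_mono norm_ge_zero times_divide_eq_right
             zero_le_mult_iff zero_le_power mult_1_right)
    qed
    then show "norm (\<Sum>k. norm (a k m)) \<le> 1 / (1 - norm q) * (norm (c m) * norm t ^ m)"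
      using Bs[of m] q power_le_one[of "norm q" m] by (simp add: suminf_nonneg B)
  qed (use t in auto)
  have "Pop q f t = (\<Sum>k. \<Sum>m. a k m)"
    unfolding Pop_def a_def using f[OF nqt] by simp
  also have "\<dots> = (\<Sum>m. \<Sum>k. a k m)" by (rule suminf_swap_abs[OF A B C])
  also have "\<dots> = (\<Sum>m. c m / (1 - q ^ m) * t ^ m)"
  proof (intro suminf_cong)
    fix m :: nat
    show "(\<Sum>k. a k m) = c m / (1 - q ^ m) * t ^ m"
    proof (cases "m = 0")
      case True then show ?thesis by (simp add: a_def c0)
    next
      case False
      have "norm (q ^ m) < 1" using q False by (simp add: norm_power power_less_one_iff)
      then have g: "(\<lambda>k. (q ^ m) ^ k) sums (1 / (1 - q ^ m))" by (rule geometric_sums)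
      have "a k m = (c m * t ^ m) * (q ^ m) ^ k" for k
        by (simp add: a_def power_mult_distrib power_mult[symmetric] mult.commute mult.left_commute)
      then have "(\<lambda>k. a k m) sums ((c m * t ^ m) * (1 / (1 - q ^ m)))"
        using sums_mult[OF g, of "c m * t ^ m"] by simp
      then show ?thesis by (simp add: sums_iff)
    qed
  qed
  finally show "Pop q f t = (\<Sum>m. c m / (1 - q ^ m) * t ^ m)" .
qed

lemma Piter_ps:
  fixes q :: complex and c :: "nat \<Rightarrow> complex"
  assumes q: "norm q < 1" and rc: "rad1 c" and c0: "c 0 = 0"
    and f: "\<And>t. norm t < 1 \<Longrightarrow> f t = (\<Sum>m. c m * t ^ m)"
  shows "rad1 (\<lambda>m. c m / (1 - q ^ m) ^ n) \<and>
         (\<forall>t. norm t < 1 \<longrightarrow> (Pop q ^^ n) f t = (\<Sum>m. c m / (1 - q ^ m) ^ n * t ^ m))"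
proof (induction n)
  case 0 then show ?case using rc f by simp
next
  case (Suc n)
  have r: "rad1 (\<lambda>m. c m / (1 - q ^ m) ^ n)" and e: "\<And>t. norm t < 1 \<Longrightarrow> (Pop q ^^ n) f t = (\<Sum>m. c m / (1 - q ^ m) ^ n * t ^ m)"
    using Suc by auto
  have z: "c 0 / (1 - q ^ 0) ^ n = 0" using c0 by simp
  have eq: "(\<lambda>m. c m / (1 - q ^ m) ^ n / (1 - q ^ m)) = (\<lambda>m. c m / (1 - q ^ m) ^ Suc n)"
    by (rule ext) (simp only: power_Suc2 divide_divide_eq_left)
  have P1: "rad1 (\<lambda>m. c m / (1 - q ^ m) ^ n / (1 - q ^ m))"
    by (rule Pop_ps(1)[where c="\<lambda>m. c m / (1 - q ^ m) ^ n" and f="(Pop q ^^ n) f", OF q r z]) (simp add: e)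
  have P2: "(Pop q ^^ Suc n) f t = (\<Sum>m. c m / (1 - q ^ m) ^ n / (1 - q ^ m) * t ^ m)" if "norm t < 1" for t
    unfolding funpow.simps comp_def
    by (rule Pop_ps(2)[where c="\<lambda>m. c m / (1 - q ^ m) ^ n" and f="(Pop q ^^ n) f", OF q r z]) (simp_all add: e that)
  have eqp: "\<And>m. c m / (1 - q ^ m) ^ n / (1 - q ^ m) = c m / (1 - q ^ m) ^ Suc n"
    using eq by (metis (no_types, lifting))
  have P1': "rad1 (\<lambda>m. c m / (1 - q ^ m) ^ Suc n)" using P1 unfolding eqp .
  have P2': "(Pop q ^^ Suc n) f t = (\<Sum>m. c m / (1 - q ^ m) ^ Suc n * t ^ m)" if "norm t < 1" for t
    using P2[OF that] unfolding eqp .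
  show ?case using P1' P2' by blast
qed

lemma Rop_Pop: "Rop q f t = Pop q f (q * t)"
  unfolding Rop_def Pop_def by (simp add: mult_ac)

lemma Rop_ps:
  fixes q :: complex and c :: "nat \<Rightarrow> complex"
  assumes q: "norm q < 1" and rc: "rad1 c" and c0: "c 0 = 0"
    and f: "\<And>t. norm t < 1 \<Longrightarrow> f t = (\<Sum>m. c m * t ^ m)"
  shows "rad1 (\<lambda>m. c m * q ^ m / (1 - q ^ m))"
    and "norm t \<le> 1 \<Longrightarrow> Rop q f t = (\<Sum>m. c m * q ^ m / (1 - q ^ m) * t ^ m)"
    and "norm t \<le> 1 \<Longrightarrow> summable (\<lambda>m. norm (c m * q ^ m / (1 - q ^ m) * t ^ m))"
proof -
  have b: "norm (q ^ m / (1 - q ^ m)) \<le> 1 / (1 - norm q)" for m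
  proof -
    have "norm (q ^ m / (1 - q ^ m)) = norm (q ^ m) * norm (1 / (1 - q ^ m))"
      by (simp add: norm_divide)
    also have "\<dots> \<le> 1 * (1 / (1 - norm q))"
      using q by (intro mult_mono norm_inv_1_minus_pow') (auto simp: norm_power power_le_one)
    finally show ?thesis by simp
  qed
  have "rad1 (\<lambda>m. q ^ m / (1 - q ^ m) * c m)" by (rule rad1_bound[OF rc b])
  then show "rad1 (\<lambda>m. c m * q ^ m / (1 - q ^ m))" by (simp add: mult_ac)
next
  assume t: "norm t \<le> 1"
  have qt: "norm (q * t) < 1"
    using q t by (simp add: norm_mult) (meson le_less_trans mult_left_le norm_ge_zero)
  have e: "(\<lambda>m. c m / (1 - q ^ m) * (q * t) ^ m) = (\<lambda>m. c m * q ^ m / (1 - q ^ m) * t ^ m)"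
    by (simp add: power_mult_distrib mult.assoc)
  show "Rop q f t = (\<Sum>m. c m * q ^ m / (1 - q ^ m) * t ^ m)"
    unfolding Rop_Pop e[symmetric] by (rule Pop_ps(2)[OF q rc c0]) (simp_all add: f qt)
  show "summable (\<lambda>m. norm (c m * q ^ m / (1 - q ^ m) * t ^ m))"
  proof -
    have P1: "rad1 (\<lambda>m. c m / (1 - q ^ m))" by (rule Pop_ps(1)[OF q rc c0]) (simp add: f)
    have ep: "\<And>m. c m / (1 - q ^ m) * (q * t) ^ m = c m * q ^ m / (1 - q ^ m) * t ^ m"
      by (simp add: power_mult_distrib mult.assoc)
    have "(\<lambda>m. norm (c m / (1 - q ^ m) * (q * t) ^ m)) = (\<lambda>m. norm (c m * q ^ m / (1 - q ^ m) * t ^ m))"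
      by (simp only: ep)
    then show ?thesis using rad1_normD[OF P1 qt] by simp
  qed
qed

lemma Riter_ps:
  fixes q :: complex and c :: "nat \<Rightarrow> complex"
  assumes q: "norm q < 1" and rc: "rad1 c" and c0: "c 0 = 0"
    and f: "\<And>t. norm t < 1 \<Longrightarrow> f t = (\<Sum>m. c m * t ^ m)"
  shows "rad1 (\<lambda>m. c m * q ^ (m * n) / (1 - q ^ m) ^ n) \<and>
         (\<forall>t. norm t < 1 \<longrightarrow> (Rop q ^^ n) f t = (\<Sum>m. c m * q ^ (m * n) / (1 - q ^ m) ^ n * t ^ m))"
proof (induction n)
  case 0 then show ?case using rc f by simp
next
  case (Suc n)
  have r: "rad1 (\<lambda>m. c m * q ^ (m * n) / (1 - q ^ m) ^ n)"
    and e: "\<And>t. norm t < 1 \<Longrightarrow> (Rop q ^^ n) f t = (\<Sum>m. c m * q ^ (m * n) / (1 - q ^ m) ^ n * t ^ m)"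
    using Suc by auto
  have z: "c 0 * q ^ (0 * n) / (1 - q ^ 0) ^ n = 0" using c0 by simp
  have eq: "(\<lambda>m. c m * q ^ (m * n) / (1 - q ^ m) ^ n * q ^ m / (1 - q ^ m)) = (\<lambda>m. c m * q ^ (m * Suc n) / (1 - q ^ m) ^ Suc n)"
    by (rule ext) (simp add: divide_inverse power_add mult_Suc_right power_Suc2 inverse_mult_distrib mult_ac)
  have R1: "rad1 (\<lambda>m. c m * q ^ (m * n) / (1 - q ^ m) ^ n * q ^ m / (1 - q ^ m))"
    by (rule Rop_ps(1)[where c="\<lambda>m. c m * q ^ (m * n) / (1 - q ^ m) ^ n" and f="(Rop q ^^ n) f", OF q r z]) (simp add: e)
  have R2: "(Rop q ^^ Suc n) f t = (\<Sum>m. c m * q ^ (m * n) / (1 - q ^ m) ^ n * q ^ m / (1 - q ^ m) * t ^ m)"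
    if "norm t < 1" for t
  proof -
    have "norm t \<le> 1" using that by simp
    have X: "Rop q ((Rop q ^^ n) f) t = (\<Sum>m. c m * q ^ (m * n) / (1 - q ^ m) ^ n * q ^ m / (1 - q ^ m) * t ^ m)"
      by (rule Rop_ps(2)[where c="\<lambda>m. c m * q ^ (m * n) / (1 - q ^ m) ^ n" and f="(Rop q ^^ n) f", OF q r z]) (simp_all add: e \<open>norm t \<le> 1\<close>)
    then show ?thesis by simp
  qed
  have eqp: "\<And>m. c m * q ^ (m * n) / (1 - q ^ m) ^ n * q ^ m / (1 - q ^ m) = c m * q ^ (m * Suc n) / (1 - q ^ m) ^ Suc n"
    using eq by (metis (no_types, lifting))
  have R1': "rad1 (\<lambda>m. c m * q ^ (m * Suc n) / (1 - q ^ m) ^ Suc n)" using R1 unfolding eqp .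
  have R2': "(Rop q ^^ Suc n) f t = (\<Sum>m. c m * q ^ (m * Suc n) / (1 - q ^ m) ^ Suc n * t ^ m)" if "norm t < 1" for t
    using R2[OF that] unfolding eqp .
  show ?case using R1' R2' by blast
qed

lemma y_ps:
  fixes c :: "nat \<Rightarrow> complex"
  assumes rc: "rad1 c" and f: "\<And>t. norm t < 1 \<Longrightarrow> f t = (\<Sum>m. c m * t ^ m)"
  shows "rad1 (\<lambda>m. \<Sum>n<m. c n)"
    and "norm t < 1 \<Longrightarrow> yfun t * f t = (\<Sum>m. (\<Sum>n<m. c n) * t ^ m)"
proof -
  show "rad1 (\<lambda>m. \<Sum>n<m. c n)" by (rule rad1_psum[OF rc])
next
  assume t: "norm t < 1"
  define e :: "nat \<Rightarrow> complex" where "e j = (if j = 0 then 0 else 1)" for j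
  have "(\<lambda>j. t ^ Suc j) sums (t * (1 / (1 - t)))"
    using sums_mult[OF geometric_sums[OF t], of t] by simp
  then have "(\<lambda>j. e j * t ^ j) sums (t / (1 - t))"
    using sums_Suc_iff[of "\<lambda>j. e j * t ^ j" "t / (1 - t)"] by (simp add: e_def)
  then have ye: "yfun t = (\<Sum>j. e j * t ^ j)" by (simp add: yfun_def sums_iff)
  have sb: "summable (\<lambda>j. norm (e j * t ^ j))"
    by (rule summable_comparison_test[OF _ summable_geometric[of "norm t"]])
       (use t in \<open>auto simp: e_def norm_power\<close>)
  have sa: "summable (\<lambda>i. norm (c i * t ^ i))" by (rule rad1_normD[OF rc t])
  have "f t * yfun t = (\<Sum>k. \<Sum>i\<le>k. (c i * t ^ i) * (e (k - i) * t ^ (k - i)))"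
    unfolding ye f[OF t] by (rule Cauchy_product[OF sa sb])
  also have "\<dots> = (\<Sum>m. (\<Sum>n<m. c n) * t ^ m)"
  proof (intro suminf_cong)
    fix k
    have "(\<Sum>i\<le>k. (c i * t ^ i) * (e (k - i) * t ^ (k - i))) = (\<Sum>i\<le>k. if k - i = 0 then 0 else c i * t ^ k)"
    proof (intro sum.cong refl)
      fix i assume "i \<in> {..k}"
      then have "t ^ i * t ^ (k - i) = t ^ k" by (simp flip: power_add)
      then show "(c i * t ^ i) * (e (k - i) * t ^ (k - i)) = (if k - i = 0 then 0 else c i * t ^ k)"
        by (simp add: e_def mult.assoc)
    qed
    also have "\<dots> = (\<Sum>i<k. c i * t ^ k)" by (rule sum_atMost_shift_if)
    finally show "(\<Sum>i\<le>k. (c i * t ^ i) * (e (k - i) * t ^ (k - i))) = (\<Sum>n<k. c n) * t ^ k"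
      by (simp add: sum_distrib_right)
  qed
  finally show "yfun t * f t = (\<Sum>m. (\<Sum>n<m. c n) * t ^ m)" by (simp add: mult.commute)
qed

definition gq :: "complex \<Rightarrow> nat \<Rightarrow> nat \<Rightarrow> nat \<Rightarrow> complex" where
  "gq q s a m = q ^ (m * (s - a)) / (1 - q ^ m) ^ s"

fun cf :: "(nat \<Rightarrow> nat \<Rightarrow> nat \<Rightarrow> 'b::comm_semiring_1) \<Rightarrow> nat list \<Rightarrow> nat list \<Rightarrow> nat \<Rightarrow> 'b" where
  "cf g [] [] m = (if m = 0 then 1 else 0)"
| "cf g (s # ss) (a # as) m = g s a m * (\<Sum>n<m. cf g ss as n)"
| "cf g _ _ m = 0"

lemma rad1_delta: "rad1 (\<lambda>m. if m = 0 then (1::'b::real_normed_algebra_1) else 0)"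
  unfolding rad1_def
proof (intro allI impI)
  fix r :: real
  have "(\<lambda>m. norm (if m = 0 then (1::'b) else 0) * r ^ m) = (\<lambda>m. if m = 0 then 1 else 0)"
    by auto
  then show "summable (\<lambda>m. norm (if m = 0 then (1::'b) else 0) * r ^ m)"
    using summable_single[of 0 "\<lambda>_. 1::real"] by simp
qed

lemma coef_id:
  fixes q h :: complex
  assumes "a \<le> s"
  shows "h / (1 - q ^ m) ^ a * q ^ (m * (s - a)) / (1 - q ^ m) ^ (s - a) = gq q s a m * h"
proof -
  have "(1 - q ^ m) ^ s = (1 - q ^ m) ^ a * (1 - q ^ m) ^ (s - a)"
    using assms by (simp flip: power_add)
  then show ?thesis
    by (simp add: gq_def divide_inverse inverse_mult_distrib mult_ac)
qed

lemma Gfun_ps: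
  fixes q :: complex
  assumes q: "norm q < 1"
  shows "length ss = length as \<Longrightarrow> (\<forall>j<length ss. as ! j \<le> ss ! j) \<Longrightarrow>
    rad1 (cf (gq q) ss as) \<and> (\<forall>t. norm t < 1 \<longrightarrow> Gfun q ss as t = (\<Sum>m. cf (gq q) ss as m * t ^ m))"
proof (induction ss as rule: list_induct2)
  case Nil
  have "(\<lambda>n. (if n = 0 then (1::complex) else 0) * t ^ n) sums t ^ 0" for t
    by (rule powser_sums_if)
  then have "(\<Sum>m. cf (gq q) [] [] m * t ^ m) = 1" for t
    by (simp add: sums_iff)
  then show ?case using rad1_delta[where 'b=complex] by (simp add: fun_eq_iff)
next
  case (Cons s ss a as)
  have as: "a \<le> s" using Cons.prems[rule_format, of 0] by simp
  have tl: "\<forall>j<length ss. as ! j \<le> ss ! j" using Cons.prems by force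
  from Cons.IH[OF tl] have r0: "rad1 (cf (gq q) ss as)"
    and e0: "\<And>t. norm t < 1 \<Longrightarrow> Gfun q ss as t = (\<Sum>m. cf (gq q) ss as m * t ^ m)" by auto
  define h where "h m = (\<Sum>n<m. cf (gq q) ss as n)" for m
  have rh: "rad1 h" unfolding h_def by (rule y_ps(1)[OF r0]) (simp add: e0)
  have eh: "yfun t * Gfun q ss as t = (\<Sum>m. h m * t ^ m)" if "norm t < 1" for t
    unfolding h_def by (rule y_ps(2)[OF r0]) (simp_all add: e0 that)
  have h0: "h 0 = 0" by (simp add: h_def)
  have PP: "rad1 (\<lambda>m. h m / (1 - q ^ m) ^ a) \<and>
         (\<forall>t. norm t < 1 \<longrightarrow> (Pop q ^^ a) (\<lambda>t. yfun t * Gfun q ss as t) t = (\<Sum>m. h m / (1 - q ^ m) ^ a * t ^ m))"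
    by (rule Piter_ps[OF q rh h0]) (simp add: eh)
  define d where "d m = h m / (1 - q ^ m) ^ a" for m
  have rd: "rad1 d" and ed: "\<And>t. norm t < 1 \<Longrightarrow> (Pop q ^^ a) (\<lambda>t. yfun t * Gfun q ss as t) t = (\<Sum>m. d m * t ^ m)"
    using PP unfolding d_def by auto
  have d0: "d 0 = 0" by (simp add: d_def h0)
  have RR: "rad1 (\<lambda>m. d m * q ^ (m * (s - a)) / (1 - q ^ m) ^ (s - a)) \<and>
         (\<forall>t. norm t < 1 \<longrightarrow> (Rop q ^^ (s - a)) ((Pop q ^^ a) (\<lambda>t. yfun t * Gfun q ss as t)) t =
             (\<Sum>m. d m * q ^ (m * (s - a)) / (1 - q ^ m) ^ (s - a) * t ^ m))"
    by (rule Riter_ps[OF q rd d0]) (simp add: ed)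
  have ceq: "\<And>m. d m * q ^ (m * (s - a)) / (1 - q ^ m) ^ (s - a) = cf (gq q) (s # ss) (a # as) m"
    unfolding d_def h_def cf.simps using coef_id[OF as] by simp
  have ceq': "(\<lambda>m. d m * q ^ (m * (s - a)) / (1 - q ^ m) ^ (s - a)) = cf (gq q) (s # ss) (a # as)"
    using ceq by (simp add: fun_eq_iff)
  show ?case using RR unfolding ceq ceq' by simp
qed

lemma Gfun_at1:
  fixes q :: complex
  assumes q: "norm q < 1" and len: "length ss = length as"
    and le: "\<forall>j<length ss. as ! j \<le> ss ! j" and lt: "a < s"
  shows "Gfun q (s # ss) (a # as) 1 = (\<Sum>m. cf (gq q) (s # ss) (a # as) m)
       \<and> summable (\<lambda>m. norm (cf (gq q) (s # ss) (a # as) m))"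
proof -
  from Gfun_ps[OF q len le] have r0: "rad1 (cf (gq q) ss as)"
    and e0: "\<And>t. norm t < 1 \<Longrightarrow> Gfun q ss as t = (\<Sum>m. cf (gq q) ss as m * t ^ m)" by auto
  define h where "h m = (\<Sum>n<m. cf (gq q) ss as n)" for m
  have rh: "rad1 h" unfolding h_def by (rule y_ps(1)[OF r0]) (simp add: e0)
  have eh: "yfun t * Gfun q ss as t = (\<Sum>m. h m * t ^ m)" if "norm t < 1" for t
    unfolding h_def by (rule y_ps(2)[OF r0]) (simp_all add: e0 that)
  have h0: "h 0 = 0" by (simp add: h_def)
  have PP: "rad1 (\<lambda>m. h m / (1 - q ^ m) ^ a) \<and>
         (\<forall>t. norm t < 1 \<longrightarrow> (Pop q ^^ a) (\<lambda>t. yfun t * Gfun q ss as t) t = (\<Sum>m. h m / (1 - q ^ m) ^ a * t ^ m))"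
    by (rule Piter_ps[OF q rh h0]) (simp add: eh)
  define d where "d m = h m / (1 - q ^ m) ^ a" for m
  have rd: "rad1 d" and ed: "\<And>t. norm t < 1 \<Longrightarrow> (Pop q ^^ a) (\<lambda>t. yfun t * Gfun q ss as t) t = (\<Sum>m. d m * t ^ m)"
    using PP unfolding d_def by auto
  have d0: "d 0 = 0" by (simp add: d_def h0)
  obtain b where b: "s - a = Suc b" using lt by (metis Suc_diff_Suc)
  define F where "F = (Pop q ^^ a) (\<lambda>t. yfun t * Gfun q ss as t)"
  have RR: "rad1 (\<lambda>m. d m * q ^ (m * b) / (1 - q ^ m) ^ b) \<and>
         (\<forall>t. norm t < 1 \<longrightarrow> (Rop q ^^ b) F t =
             (\<Sum>m. d m * q ^ (m * b) / (1 - q ^ m) ^ b * t ^ m))"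
    unfolding F_def by (rule Riter_ps[OF q rd d0]) (simp add: ed)
  define e where "e m = d m * q ^ (m * b) / (1 - q ^ m) ^ b" for m
  have re: "rad1 e" and ee: "\<And>t. norm t < 1 \<Longrightarrow> (Rop q ^^ b) F t = (\<Sum>m. e m * t ^ m)"
    using RR unfolding e_def by auto
  have e0': "e 0 = 0" by (simp add: e_def d0)
  have X1: "Rop q ((Rop q ^^ b) F) 1 = (\<Sum>m. e m * q ^ m / (1 - q ^ m) * 1 ^ m)"
    by (rule Rop_ps(2)[OF q re e0']) (simp_all add: ee)
  have X2: "summable (\<lambda>m. norm (e m * q ^ m / (1 - q ^ m) * 1 ^ m))"
    by (rule Rop_ps(3)[OF q re e0']) (simp_all add: ee)
  have ceq: "e m * q ^ m / (1 - q ^ m) = cf (gq q) (s # ss) (a # as) m" for m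
  proof -
    have "e m * q ^ m / (1 - q ^ m) = d m * q ^ (m * (s - a)) / (1 - q ^ m) ^ (s - a)"
      unfolding e_def b by (simp add: divide_inverse power_add mult_Suc_right power_Suc2 inverse_mult_distrib mult_ac)
    also have "\<dots> = cf (gq q) (s # ss) (a # as) m"
      unfolding d_def h_def cf.simps using coef_id[of a s] lt by simp
    finally show ?thesis .
  qed
  have G: "Gfun q (s # ss) (a # as) 1 = Rop q ((Rop q ^^ b) F) 1"
    by (simp add: b F_def)
  show ?thesis using X1 X2 unfolding G ceq by simp
qed

definition Sd :: "nat \<Rightarrow> nat list set" where
  "Sd n = {ks. length ks = n \<and> sorted_wrt (>) ks \<and> (\<forall>k\<in>set ks. 0 < k)}"

definition kh :: "nat list \<Rightarrow> nat" where
  "kh ks = (case ks of [] \<Rightarrow> 0 | k # _ \<Rightarrow> k)"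

definition TT :: "(nat \<Rightarrow> nat \<Rightarrow> nat \<Rightarrow> 'b::comm_semiring_1) \<Rightarrow> nat list \<Rightarrow> nat list \<Rightarrow> nat list \<Rightarrow> 'b" where
  "TT g ss as ks = (\<Prod>j<length ss. g (ss ! j) (as ! j) (ks ! j))"

lemma kh_bound: "sorted_wrt (>) ks \<Longrightarrow> x \<in> set ks \<Longrightarrow> x \<le> kh ks"
  by (cases ks) (auto simp: kh_def)

lemma finite_Sd_le: "finite {ks \<in> Sd n. kh ks \<le> M}"
proof (rule finite_subset)
  show "{ks \<in> Sd n. kh ks \<le> M} \<subseteq> {ks. set ks \<subseteq> {..M} \<and> length ks = n}"
    using kh_bound by (fastforce simp: Sd_def)
  show "finite {ks. set ks \<subseteq> {..M} \<and> length ks = n}"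
    by (rule finite_lists_length_eq) simp
qed

lemma finite_Sd_eq: "finite {ks \<in> Sd n. kh ks = m}"
  by (rule finite_subset[OF _ finite_Sd_le[of n m]]) auto

lemma finite_Sd_less: "finite {ks \<in> Sd n. kh ks < m}"
  by (rule finite_subset[OF _ finite_Sd_le[of n m]]) auto

lemma Sd_Suc: "{ks \<in> Sd (Suc n). kh ks = m} = (Cons m) ` {ks \<in> Sd n. kh ks < m}"
proof (intro equalityI subsetI)
  fix ks assume "ks \<in> {ks \<in> Sd (Suc n). kh ks = m}"
  then obtain k ks' where ks: "ks = k # ks'" and k: "k = m" and l: "length ks' = n"
    and so: "sorted_wrt (>) (k # ks')" and p: "\<forall>x\<in>set (k # ks'). 0 < x"
    by (cases ks) (auto simp: Sd_def kh_def)
  have "kh ks' < m"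
  proof (cases ks')
    case Nil then show ?thesis using p k by (simp add: kh_def)
  next
    case (Cons x xs) then show ?thesis using so k by (simp add: kh_def)
  qed
  moreover have "ks' \<in> Sd n" using l so p by (simp add: Sd_def)
  ultimately show "ks \<in> (Cons m) ` {ks \<in> Sd n. kh ks < m}"
    using ks k by blast
next
  fix ks assume "ks \<in> (Cons m) ` {ks \<in> Sd n. kh ks < m}"
  then obtain ks' where ks: "ks = m # ks'" and ks': "ks' \<in> Sd n" and lt: "kh ks' < m" by auto
  have so': "sorted_wrt (>) ks'" using ks' by (simp add: Sd_def)
  have "\<forall>x\<in>set ks'. x < m"
  proof
    fix x assume "x \<in> set ks'"
    then have "x \<le> kh ks'" using kh_bound[OF so'] by blast
    then show "x < m" using lt by simp
  qed
  moreover have "0 < m" using lt by simp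
  ultimately have c2: "sorted_wrt (>) (m # ks')" "\<forall>k\<in>set (m # ks'). 0 < k"
    using so' ks' by (auto simp: Sd_def)
  have c1: "length (m # ks') = Suc n" using ks' by (simp add: Sd_def)
  have c3: "kh (m # ks') = m" by (simp add: kh_def)
  show "ks \<in> {ks \<in> Sd (Suc n). kh ks = m}"
    unfolding ks Sd_def using c1 c2 c3 by blast
qed

lemma TT_Cons: "TT g (s # ss) (a # as) (k # ks) = g s a k * TT g ss as ks"
  unfolding TT_def by (simp only: length_Cons prod.lessThan_Suc_shift) simp

lemma sum_D:
  "length ss = length as \<Longrightarrow> (\<Sum>ks\<in>{ks \<in> Sd (length ss). kh ks = m}. TT g ss as ks) = cf g ss as m"
proof (induction ss as arbitrary: m rule: list_induct2)
  case Nil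
  have S0: "Sd 0 = {[]}" unfolding Sd_def by auto
  have "{ks \<in> Sd 0. kh ks = m} = (if m = 0 then {[]} else {})"
    unfolding S0 by (auto simp: kh_def)
  then show ?case by (simp add: TT_def)
next
  case (Cons s ss a as)
  let ?A = "{ks \<in> Sd (length ss). kh ks < m}"
  have e1: "{ks \<in> Sd (length (s # ss)). kh ks = m} = Cons m ` ?A"
    unfolding length_Cons by (rule Sd_Suc)
  have "(\<Sum>ks\<in>{ks \<in> Sd (length (s # ss)). kh ks = m}. TT g (s # ss) (a # as) ks)
      = (\<Sum>ks\<in>?A. TT g (s # ss) (a # as) (m # ks))"
    unfolding e1 by (rule sum.reindex_cong[where l="Cons m"]) (auto simp: inj_on_def)
  also have "\<dots> = g s a m * (\<Sum>ks\<in>?A. TT g ss as ks)"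
    unfolding TT_Cons by (rule sum_distrib_left[symmetric])
  also have "(\<Sum>ks\<in>?A. TT g ss as ks) = (\<Sum>n\<in>{..<m}. \<Sum>ks\<in>{x \<in> ?A. kh x = n}. TT g ss as ks)"
    by (rule sum.group[symmetric]) (use finite_Sd_less in auto)
  also have "\<dots> = (\<Sum>n<m. cf g ss as n)"
  proof (intro sum.cong refl)
    fix n assume "n \<in> {..<m}"
    then have "{x \<in> ?A. kh x = n} = {ks \<in> Sd (length ss). kh ks = n}" by auto
    then show "(\<Sum>ks\<in>{x \<in> ?A. kh x = n}. TT g ss as ks) = cf g ss as n" using Cons.IH by simp
  qed
  finally show ?case by simp
qed

definition gn :: "complex \<Rightarrow> nat \<Rightarrow> nat \<Rightarrow> nat \<Rightarrow> real" where
  "gn q s a m = norm (gq q s a m)"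

lemma TT_norm: "TT (gn q) ss as ks = norm (TT (gq q) ss as ks)"
  unfolding TT_def gn_def by (rule prod_norm)

lemma cf_gn_sum: "length ss = length as \<Longrightarrow>
   cf (gn q) ss as m = (\<Sum>ks\<in>{ks \<in> Sd (length ss). kh ks = m}. norm (TT (gq q) ss as ks))"
  using sum_D[of ss as "gn q" m] by (simp add: TT_norm)

lemma cf_gn_nonneg: "length ss = length as \<Longrightarrow> 0 \<le> cf (gn q) ss as m"
  by (simp add: cf_gn_sum sum_nonneg)

lemma cf_norm_le: "length ss = length as \<Longrightarrow> norm (cf (gq q) ss as m) \<le> cf (gn q) ss as m"
  using sum_D[of ss as "gq q" m] norm_sum[of "TT (gq q) ss as" "{ks \<in> Sd (length ss). kh ks = m}"]
  by (simp add: cf_gn_sum)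

lemma gq_bound:
  assumes q: "norm q < 1"
  shows "norm (gq q s a m) \<le> norm q ^ (m * (s - a)) * (1 / (1 - norm q)) ^ s"
proof -
  have "gq q s a m = q ^ (m * (s - a)) * (1 / (1 - q ^ m)) ^ s"
    by (simp add: gq_def power_one_over)
  then have "norm (gq q s a m) = norm q ^ (m * (s - a)) * norm (1 / (1 - q ^ m)) ^ s"
    by (simp add: norm_mult norm_power)
  also have "\<dots> \<le> norm q ^ (m * (s - a)) * (1 / (1 - norm q)) ^ s"
    by (intro mult_left_mono power_mono norm_inv_1_minus_pow'[OF q]) auto
  finally show ?thesis .
qed

lemma gq_bound1:
  assumes q: "norm q < 1"
  shows "norm (gq q s a m) \<le> (1 / (1 - norm q)) ^ s"
proof -
  have "norm q ^ (m * (s - a)) \<le> 1" using q by (simp add: power_le_one)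
  moreover have "0 \<le> (1 / (1 - norm q)) ^ s" using q by simp
  ultimately have "norm q ^ (m * (s - a)) * (1 / (1 - norm q)) ^ s \<le> 1 * (1 / (1 - norm q)) ^ s"
    by (rule mult_right_mono)
  then show ?thesis using gq_bound[OF q, of s a m] by simp
qed

lemma gq_bound2:
  assumes q: "norm q < 1" and lt: "a < s"
  shows "norm (gq q s a m) \<le> norm q ^ m * (1 / (1 - norm q)) ^ s"
proof -
  have "norm q ^ (m * (s - a)) \<le> norm q ^ m"
    by (rule power_decreasing) (use q lt in auto)
  moreover have "0 \<le> (1 / (1 - norm q)) ^ s" using q by simp
  ultimately have "norm q ^ (m * (s - a)) * (1 / (1 - norm q)) ^ s \<le> norm q ^ m * (1 / (1 - norm q)) ^ s"
    by (rule mult_right_mono)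
  then show ?thesis using gq_bound[OF q, of s a m] by simp
qed

lemma rad1_cf_gn:
  assumes q: "norm q < 1"
  shows "length ss = length as \<Longrightarrow> rad1 (cf (gn q) ss as)"
proof (induction ss as rule: list_induct2)
  case Nil
  show ?case using rad1_delta[where 'b=real] by (simp add: fun_eq_iff)
next
  case (Cons s ss a as)
  have "rad1 (\<lambda>m. gn q s a m * (\<Sum>n<m. cf (gn q) ss as n))"
    by (rule rad1_bound[OF rad1_psum[OF Cons.IH], of _ "(1 / (1 - norm q)) ^ s"])
       (simp add: gn_def gq_bound1[OF q])
  then show ?case by (simp add: fun_eq_iff)
qed

lemma summable_cf_gn:
  assumes q: "norm q < 1" and len: "length ss = length as" and lt: "a < s"
  shows "summable (cf (gn q) (s # ss) (a # as))"
proof -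
  define H where "H m = (\<Sum>n<m. cf (gn q) ss as n)" for m
  have rH: "rad1 H" unfolding H_def by (rule rad1_psum[OF rad1_cf_gn[OF q len]])
  have sH: "summable (\<lambda>m. (1 / (1 - norm q)) ^ s * (norm (H m) * norm q ^ m))"
    by (rule summable_mult[OF rad1D[OF rH]]) (use q in auto)
  show ?thesis
  proof (rule summable_comparison_test[OF _ sH], intro exI allI impI)
    fix m :: nat
    have Hn: "0 \<le> H m" unfolding H_def by (intro sum_nonneg cf_gn_nonneg[OF len])
    have "norm (cf (gn q) (s # ss) (a # as) m) = gn q s a m * H m"
      using Hn by (simp add: H_def gn_def)
    also have "\<dots> \<le> norm q ^ m * (1 / (1 - norm q)) ^ s * H m"
      using Hn gq_bound2[OF q lt, of m] by (simp add: gn_def mult_right_mono)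
    finally show "norm (cf (gn q) (s # ss) (a # as) m) \<le> (1 / (1 - norm q)) ^ s * (norm (H m) * norm q ^ m)"
      using Hn by (simp add: mult_ac)
  qed
qed

lemma infsum_Union_banach:
  fixes f :: "'a \<Rightarrow> 'c::banach"
  assumes sf: "f summable_on (\<Union>x\<in>A. B x)" and disj: "disjoint_family_on B A"
  shows "infsum f (\<Union>x\<in>A. B x) = infsum (\<lambda>x. infsum f (B x)) A"
proof -
  have inj: "inj_on snd (Sigma A B)"
    using disj by (force simp: disjoint_family_on_def inj_on_def)
  have im: "snd ` Sigma A B = (\<Union>x\<in>A. B x)" by force
  have fs: "(f \<circ> snd) = (\<lambda>(x, y). f y)" by (auto simp: fun_eq_iff)
  have s0: "(f \<circ> snd) summable_on Sigma A B"
    using summable_on_reindex[OF inj, of f] sf im by simp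
  have s: "(\<lambda>(x, y). f y) summable_on Sigma A B"
    using s0 unfolding fs .
  have "infsum f (\<Union>x\<in>A. B x) = infsum (f \<circ> snd) (Sigma A B)"
    using infsum_reindex[OF inj, of f] im by simp
  also have "\<dots> = infsum (\<lambda>(x, y). f y) (Sigma A B)" unfolding fs ..
  also have "\<dots> = infsum (\<lambda>x. infsum f (B x)) A"
    using infsum_Sigma'_banach[of "\<lambda>x y. f y" A B] s by simp
  finally show ?thesis .
qed

lemma map2_nth: "j < length xs \<Longrightarrow> length xs = length ys \<Longrightarrow> map2 f xs ys ! j = f (xs ! j) (ys ! j)"
  by simp

lemma mzq_eq:
  assumes q: "norm q < 1" and len: "length ss = length as" and lt: "a < s"
  shows "mzq q (map2 (-) (s # ss) (a # as)) (s # ss) = (\<Sum>m. cf (gq q) (s # ss) (a # as) m)"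
proof -
  let ?s = "s # ss" and ?a = "a # as"
  let ?L = "length ?s"
  let ?T = "TT (gq q) ?s ?a"
  define D where "D m = {ks \<in> Sd ?L. kh ks = m}" for m
  have len2: "length ?s = length ?a" using len by simp
  have T: "mzq q (map2 (-) ?s ?a) ?s = infsum ?T (Sd ?L)"
    unfolding mzq_def Sd_def[symmetric]
  proof (rule infsum_cong)
    fix ks
    show "(\<Prod>j<length ?s. q ^ (ks ! j * map2 (-) ?s ?a ! j) / (1 - q ^ ks ! j) ^ (?s ! j)) = ?T ks"
      unfolding TT_def
    proof (rule prod.cong[OF refl])
      fix j assume "j \<in> {..<length ?s}"
      then have "map2 (-) ?s ?a ! j = ?s ! j - ?a ! j" using len2 map2_nth[of j ?s ?a "(-)"] by simp
      then show "q ^ (ks ! j * map2 (-) ?s ?a ! j) / (1 - q ^ ks ! j) ^ (?s ! j) = gq q (?s ! j) (?a ! j) (ks ! j)"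
        by (simp add: gq_def)
    qed
  qed
  have U: "Sd ?L = (\<Union>m\<in>UNIV. D m)" unfolding D_def by blast
  have disj: "disjoint_family_on D UNIV" unfolding disjoint_family_on_def D_def by blast
  have finD: "finite (D m)" for m unfolding D_def by (rule finite_Sd_eq)
  have sn: "(\<lambda>ks. norm (?T ks)) summable_on (\<Union>m\<in>UNIV. D m)"
  proof (rule summable_on_UnionI[where g = "cf (gn q) ?s ?a"])
    show "((\<lambda>ks. norm (?T ks)) has_sum cf (gn q) ?s ?a m) (D m)" for m
      using has_sum_finite[OF finD[of m], of "\<lambda>ks. norm (?T ks)"] cf_gn_sum[OF len2, of q m]
      by (simp add: D_def)
    show "cf (gn q) ?s ?a summable_on UNIV"
      by (rule summable_nonneg_imp_summable_on[OF summable_cf_gn[OF q len lt] cf_gn_nonneg[OF len2]])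
  qed (auto simp: disj)
  have s: "?T summable_on (\<Union>m\<in>UNIV. D m)" by (rule abs_summable_summable[OF sn])
  have "infsum ?T (Sd ?L) = infsum (\<lambda>m. infsum ?T (D m)) UNIV"
    unfolding U by (rule infsum_Union_banach[OF s disj])
  also have "\<dots> = infsum (\<lambda>m. cf (gq q) ?s ?a m) UNIV"
  proof (intro infsum_cong)
    fix m
    have "infsum ?T (D m) = sum ?T (D m)" by (rule infsum_finite[OF finD])
    also have "\<dots> = cf (gq q) ?s ?a m" unfolding D_def by (rule sum_D[OF len2])
    finally show "infsum ?T (D m) = cf (gq q) ?s ?a m" .
  qed
  also have "\<dots> = (\<Sum>m. cf (gq q) ?s ?a m)"
  proof (rule infsum_eq_suminf_nat[OF norm_summable_imp_summable_on])
    show "summable (\<lambda>m. norm (cf (gq q) ?s ?a m))"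
      by (rule summable_comparison_test[OF _ summable_cf_gn[OF q len lt]])
         (use cf_norm_le[OF len2] in auto)
  qed
  finally show ?thesis using T by simp
qed

theorem theorem6p3:
  fixes q :: complex and s a :: "nat list"
  assumes "norm q < 1"
    and "length s \<ge> 1"
    and "length a = length s"
    and "\<forall>j<length s. 1 \<le> s ! j"
    and "\<forall>j<length s. a ! j \<le> s ! j"
    and "\<forall>j\<in>{1..length s}. (\<Sum>i<j. a ! i) < (\<Sum>i<j. s ! i)"
  shows "zetaq q (map2 (-) s a) s = (1 - q) ^ sum_list s * Gfun q s a 1 \<and>
         mzq q (map2 (-) s a) s = Gfun q s a 1"
proof -
  obtain s0 ss where s: "s = s0 # ss" using assms(2) by (cases s) auto
  obtain a0 as where a: "a = a0 # as" using assms(3) s by (cases a) auto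
  have len: "length ss = length as" using assms(3) s a by simp
  have lt: "a0 < s0" using assms(6) s a by force
  have le: "\<forall>j<length ss. as ! j \<le> ss ! j"
  proof (intro allI impI)
    fix j assume "j < length ss"
    then show "as ! j \<le> ss ! j" using assms(5) s a by (metis Suc_less_eq length_Cons nth_Cons_Suc)
  qed
  have G1: "Gfun q s a 1 = (\<Sum>m. cf (gq q) s a m)"
    using Gfun_at1[OF assms(1) len le lt] s a by simp
  have M: "mzq q (map2 (-) s a) s = Gfun q s a 1"
    using mzq_eq[OF assms(1) len lt] G1 s a by simp
  then show ?thesis by (simp add: zetaq_def)
qed

end
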